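(* Let $X$ be a finite-dimensional real Banach space with a skipped 1-unconditional basis $(e_k)_{k=1}^{2N+1}$ and biorthogonal functionals $(e_k^* )_{k=1}^{2N+1}$. Suppose $\mathrm{ubc}(e^*_{2j-1})_{j=1}^{N+1}=\mu>1$. Then $\mathrm{ubc}(e_j^* )_{j=1}^{2N+1}\ge 1+2(\mu-1)$.
   Context: A basic sequence $(e_k)_{k=1}^N$ ($1\le N\le\infty$) is skipped $\lambda$-unconditional if whenever $0=m_0<m_1<\dots<m_n<\infty$ with $m_j-m_{j-1}\ge2$ for $1\le j\le n$, and $y_j\in[e_i]_{i=m_{j-1}+1}^{m_j-1}$ (spans taken only over indices $i\le N$), then $\|\sum_{j=1}^n\epsilon_jy_j\|\le\lambda\|\sum_{j=1}^ny_j\|$ for all signs $\epsilon_j=\pm1$. For a finite linearly independent sequence $(f_j)_{j\in A}$, $\mathrm{ubc}(f_j)_{j\in A}$ (unconditional basis constant) is the least $K$ such that $\|\sum_{j\in A}\epsilon_ja_jf_j\|\le K\|\sum_{j\in A}a_jf_j\|$ for all scalars $a_j$ and signs $\epsilon_j=\pm1$. *)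

theory Defs
  imports "HOL-Analysis.Analysis"
begin

definition lin_indep_family :: "('i \<Rightarrow> 'b::real_vector) \<Rightarrow> 'i set \<Rightarrow> bool" where
  "lin_indep_family f A \<longleftrightarrow>
     (\<forall>c. (\<Sum>j\<in>A. c j *\<^sub>R f j) = 0 \<longrightarrow> (\<forall>j\<in>A. c j = 0))"

definition ubc :: "('i \<Rightarrow> 'b::real_normed_vector) \<Rightarrow> 'i set \<Rightarrow> real" where
  "ubc f A = Inf {K. \<forall>a \<epsilon>. (\<forall>j\<in>A. \<epsilon> j = 1 \<or> \<epsilon> j = -1) \<longrightarrow>
      norm (\<Sum>j\<in>A. (\<epsilon> j * a j) *\<^sub>R f j) \<le> K * norm (\<Sum>j\<in>A. a j *\<^sub>R f j)}"

definition skipped_unconditional :: "real \<Rightarrow> (nat \<Rightarrow> 'a::real_normed_vector) \<Rightarrow> nat \<Rightarrow> bool" where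
  "skipped_unconditional lam e L \<longleftrightarrow>
     (\<forall>n (m::nat \<Rightarrow> nat) (y::nat \<Rightarrow> 'a) (\<epsilon>::nat \<Rightarrow> real).
        m 0 = 0 \<longrightarrow>
        (\<forall>j\<in>{1..n}. m j \<ge> m (j - 1) + 2) \<longrightarrow>
        (\<forall>j\<in>{1..n}. y j \<in> span (e ` {i. m (j - 1) < i \<and> i < m j \<and> 1 \<le> i \<and> i \<le> L})) \<longrightarrow>
        (\<forall>j\<in>{1..n}. \<epsilon> j = 1 \<or> \<epsilon> j = -1) \<longrightarrow>
        norm (\<Sum>j=1..n. \<epsilon> j *\<^sub>R y j) \<le> lam * norm (\<Sum>j=1..n. y j))"

end

theory Submission
  imports Defs
begin

lemma expand_span:
  fixes e :: "nat \<Rightarrow> 'a::real_normed_vector" and estar :: "nat \<Rightarrow> ('a \<Rightarrow>\<^sub>L real)"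
  assumes biorth: "\<forall>k\<in>{1..L}. \<forall>i\<in>{1..L}. estar k (e i) = (if k = i then 1 else 0)"
    and S: "S \<subseteq> {1..L}" and x: "x \<in> span (e ` S)"
  shows "x = (\<Sum>i\<in>S. estar i x *\<^sub>R e i)"
  using x
proof (induction rule: span_induct_alt)
  case base
  then show ?case by (simp add: blinfun.zero_right)
next
  case (step c x y)
  then obtain k where k: "k \<in> S" "x = e k" by auto
  have fin: "finite S" using S finite_subset by blast
  have "(\<Sum>i\<in>S. estar i (c *\<^sub>R x + y) *\<^sub>R e i)
      = (\<Sum>i\<in>S. (c * estar i x) *\<^sub>R e i) + (\<Sum>i\<in>S. estar i y *\<^sub>R e i)"
    by (simp add: blinfun.add_right blinfun.scaleR_right scaleR_add_left sum.distrib)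
  also have "(\<Sum>i\<in>S. (c * estar i x) *\<^sub>R e i) = (\<Sum>i\<in>S. (if i = k then c else 0) *\<^sub>R e i)"
  proof (rule sum.cong[OF refl])
    fix i assume i: "i \<in> S"
    then have "i \<in> {1..L}" "k \<in> {1..L}" using S k by auto
    then show "(c * estar i x) *\<^sub>R e i = (if i = k then c else 0) *\<^sub>R e i"
      using biorth k by auto
  qed
  also have "\<dots> = (\<Sum>i\<in>S. if i = k then c *\<^sub>R e i else 0)" by (rule sum.cong) auto
  also have "\<dots> = c *\<^sub>R x" using k fin by simp
  finally show ?case using step by simp
qed

lemma functional_expand:
  fixes e :: "nat \<Rightarrow> 'a::real_normed_vector" and estar :: "nat \<Rightarrow> ('a \<Rightarrow>\<^sub>L real)"
    and \<phi> :: "'a \<Rightarrow>\<^sub>L real"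
  assumes biorth: "\<forall>k\<in>{1..L}. \<forall>i\<in>{1..L}. estar k (e i) = (if k = i then 1 else 0)"
    and spans: "span (e ` {1..L}) = UNIV"
  shows "\<phi> = (\<Sum>i\<in>{1..L}. \<phi> (e i) *\<^sub>R estar i)"
proof (rule blinfun_eqI)
  fix x
  have "x = (\<Sum>i\<in>{1..L}. estar i x *\<^sub>R e i)"
    using expand_span[OF biorth, of "{1..L}" x] spans by auto
  then have "\<phi> x = \<phi> (\<Sum>i\<in>{1..L}. estar i x *\<^sub>R e i)" by simp
  also have "\<dots> = (\<Sum>i\<in>{1..L}. estar i x * \<phi> (e i))"
    by (simp add: blinfun.sum_right blinfun.scaleR_right)
  finally show "\<phi> x = (\<Sum>i\<in>{1..L}. \<phi> (e i) *\<^sub>R estar i) x"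
    by (simp add: blinfun.sum_left blinfun.scaleR_left mult.commute)
qed

lemma eval_sum:
  fixes e :: "nat \<Rightarrow> 'a::real_normed_vector" and estar :: "nat \<Rightarrow> ('a \<Rightarrow>\<^sub>L real)"
  assumes biorth: "\<forall>k\<in>{1..L}. \<forall>i\<in>{1..L}. estar k (e i) = (if k = i then 1 else 0)"
    and i: "i \<in> {1..L}"
  shows "(\<Sum>k\<in>{1..L}. c k *\<^sub>R estar k) (e i) = c i"
proof -
  have "(\<Sum>k\<in>{1..L}. c k *\<^sub>R estar k) (e i) = (\<Sum>k\<in>{1..L}. if k = i then c k else 0)"
    unfolding blinfun.sum_left by (rule sum.cong) (use biorth i in \<open>auto simp: blinfun.scaleR_left\<close>)
  also have "\<dots> = c i" using i by simp
  finally show ?thesis .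
qed

lemma odd_eval:
  fixes e :: "nat \<Rightarrow> 'a::real_normed_vector" and estar :: "nat \<Rightarrow> ('a \<Rightarrow>\<^sub>L real)"
  assumes biorth: "\<forall>k\<in>{1..2*N+1}. \<forall>i\<in>{1..2*N+1}. estar k (e i) = (if k = i then 1 else 0)"
    and i: "i \<in> {1..2*N+1}"
  shows "(\<Sum>j\<in>{1..N+1}. c j *\<^sub>R estar (2*j-1)) (e i) = (if odd i then c ((i+1) div 2) else 0)"
proof -
  have "(\<Sum>j\<in>{1..N+1}. c j *\<^sub>R estar (2*j-1)) (e i)
     = (\<Sum>j\<in>{1..N+1}. if j = (i+1) div 2 \<and> odd i then c j else 0)"
    unfolding blinfun.sum_left
  proof (rule sum.cong[OF refl])
    fix j assume j: "j \<in> {1..N+1}"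
    have "2*j-1 \<in> {1..2*N+1}" using j by (auto; presburger)
    moreover have "(2*j-1 = i) \<longleftrightarrow> (j = (i+1) div 2 \<and> odd i)" using j by (auto; presburger)
    ultimately have "estar (2*j-1) (e i) = (if j = (i+1) div 2 \<and> odd i then 1 else 0)"
      using biorth i by (simp only:)
    then show "(c j *\<^sub>R estar (2*j-1)) (e i) = (if j = (i+1) div 2 \<and> odd i then c j else 0)"
      unfolding blinfun.scaleR_left real_scaleR_def by (simp only: mult_1_right mult_zero_right if_distrib[of "\<lambda>x. c j * x"])
  qed
  also have "\<dots> = (if odd i then c ((i+1) div 2) else 0)"
  proof (cases "odd i")
    case True
    then have "(i+1) div 2 \<in> {1..N+1}" using i by auto
    then show ?thesis using True by (simp add: sum.delta')
  qed simp
  finally show ?thesis .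
qed

lemma hb_step:
  fixes \<phi> \<psi> :: "'a::real_normed_vector \<Rightarrow>\<^sub>L real"
  assumes W: "subspace W" and bd: "\<forall>w\<in>W. \<bar>\<phi> w\<bar> \<le> M * norm w"
    and van: "\<forall>w\<in>W. \<psi> w = 0" and z: "\<psi> z = 1" and M: "M \<ge> 0"
  shows "\<exists>b. \<forall>x\<in>span (insert z W). \<bar>\<phi> x + b * \<psi> x\<bar> \<le> M * norm x"
proof -
  have pair: "\<phi> w1 - M * norm (w1 - z) \<le> M * norm (w2 + z) - \<phi> w2" if "w1 \<in> W" "w2 \<in> W" for w1 w2
  proof -
    have "\<phi> w1 + \<phi> w2 = \<phi> (w1 + w2)" by (simp add: blinfun.add_right)
    also have "\<dots> \<le> M * norm (w1 + w2)" using bd W that by (meson abs_le_D1 subspace_add)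
    also have "norm (w1 + w2) \<le> norm (w1 - z) + norm (w2 + z)"
      using norm_triangle_ineq[of "w1 - z" "w2 + z"] by simp
    ultimately show ?thesis using M mult_left_mono[of "norm (w1 + w2)" "norm (w1 - z) + norm (w2 + z)" M]
      by (simp add: algebra_simps)
  qed
  define A where "A = {\<phi> w - M * norm (w - z) | w. w \<in> W}"
  define c where "c = Sup A"
  have W0: "0 \<in> W" using W subspace_0 by blast
  have neA: "A \<noteq> {}" using W0 unfolding A_def by blast
  have bdA: "bdd_above A" unfolding A_def bdd_above_def using pair W0 by blast
  have lo: "\<phi> w - M * norm (w - z) \<le> c" if "w \<in> W" for w
    unfolding c_def by (rule cSup_upper[OF _ bdA]) (use that A_def in blast)
  have hi: "c \<le> M * norm (w + z) - \<phi> w" if "w \<in> W" for w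
    unfolding c_def by (rule cSup_least[OF neA]) (use that pair A_def in blast)
  have main: "\<phi> w + t * c \<le> M * norm (w + t *\<^sub>R z)" if w: "w \<in> W" for w t
  proof -
    consider "t > 0" | "t < 0" | "t = 0" by linarith
    then show ?thesis
    proof cases
      case 1
      define w' where "w' = (1/t) *\<^sub>R w"
      have w'W: "w' \<in> W" using W w unfolding w'_def by (simp add: subspace_scale)
      have ww: "w = t *\<^sub>R w'" using 1 unfolding w'_def by simp
      have "t * c \<le> t * (M * norm (w' + z) - \<phi> w')"
        using hi[OF w'W] 1 by (simp add: mult_left_mono)
      also have "\<dots> = M * norm (t *\<^sub>R (w' + z)) - \<phi> (t *\<^sub>R w')"
        using 1 by (simp only: norm_scaleR blinfun.scaleR_right) (simp add: algebra_simps)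
      finally show ?thesis using ww by (simp add: scaleR_add_right)
    next
      case 2
      define s where "s = - t"
      have s: "s > 0" using 2 s_def by simp
      define w' where "w' = (1/s) *\<^sub>R w"
      have w'W: "w' \<in> W" using W w unfolding w'_def by (simp add: subspace_scale)
      have ww: "w = s *\<^sub>R w'" using s unfolding w'_def by simp
      have "s * (\<phi> w' - M * norm (w' - z)) \<le> s * c"
        using lo[OF w'W] s by (simp add: mult_left_mono)
      moreover have "s * (\<phi> w' - M * norm (w' - z)) = \<phi> (s *\<^sub>R w') - M * norm (s *\<^sub>R (w' - z))"
        using s by (simp only: norm_scaleR blinfun.scaleR_right) (simp add: algebra_simps)
      moreover have "s *\<^sub>R (w' - z) = w + t *\<^sub>R z" using ww s_def by (simp add: algebra_simps)
      ultimately have "\<phi> w - M * norm (w + t *\<^sub>R z) \<le> s * c" by (simp only: ww[symmetric])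
      then show ?thesis using s_def by simp
    next
      case 3
      then show ?thesis using bd w by (simp add: abs_le_iff)
    qed
  qed
  show ?thesis
  proof (intro exI ballI)
    fix x assume "x \<in> span (insert z W)"
    then obtain t where "x - t *\<^sub>R z \<in> span W" unfolding span_insert by blast
    then have wW: "x - t *\<^sub>R z \<in> W" using W by (metis span_eq_iff)
    define w where "w = x - t *\<^sub>R z"
    have xw: "x = w + t *\<^sub>R z" unfolding w_def by simp
    have psx: "\<psi> x = t" using van wW z unfolding xw w_def[symmetric]
      by (simp add: blinfun.add_right blinfun.scaleR_right)
    have phx: "\<phi> x + (c - \<phi> z) * \<psi> x = \<phi> w + t * c"
    proof -
      have "\<phi> x = \<phi> w + t * \<phi> z" unfolding xw by (simp add: blinfun.add_right blinfun.scaleR_right)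
      then show ?thesis unfolding psx by (simp add: algebra_simps)
    qed
    have wW': "w \<in> W" using wW unfolding w_def .
    have m1: "\<phi> w + t * c \<le> M * norm x" using main[OF wW', of t] by (simp only: xw[symmetric])
    have "-w \<in> W" using wW' W by (simp add: subspace_neg)
    then have "\<phi> (-w) + (-t) * c \<le> M * norm (-w + (-t) *\<^sub>R z)" by (rule main)
    also have "-w + (-t) *\<^sub>R z = - x" using xw by simp
    finally have m2: "-(\<phi> w + t * c) \<le> M * norm x" by (simp add: blinfun.minus_right)
    show "\<bar>\<phi> x + (c - \<phi> z) * \<psi> x\<bar> \<le> M * norm x" using phx m1 m2 by linarith
  qed
qed


lemma vanish_span:
  fixes \<psi> :: "'a::real_normed_vector \<Rightarrow>\<^sub>L real"
  assumes "\<forall>b\<in>B. \<psi> b = 0" and "w \<in> span B"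
  shows "\<psi> w = 0"
  using assms(2)
proof (induction rule: span_induct_alt)
  case base then show ?case by (simp add: blinfun.zero_right)
next
  case (step c x y) then show ?case using assms(1) by (simp add: blinfun.add_right blinfun.scaleR_right)
qed

theorem lemma5p2:
  fixes e :: "nat \<Rightarrow> 'a::banach"
    and estar :: "nat \<Rightarrow> ('a \<Rightarrow>\<^sub>L real)"
    and N :: nat and \<mu> :: real
  assumes indep: "lin_indep_family e {1..2*N+1}"
    and spans: "span (e ` {1..2*N+1}) = UNIV"
    and skipped: "skipped_unconditional 1 e (2*N+1)"
    and biorth: "\<forall>k\<in>{1..2*N+1}. \<forall>i\<in>{1..2*N+1}. estar k (e i) = (if k = i then 1 else 0)"
    and mu_def: "ubc (\<lambda>j. estar (2*j - 1)) {1..N+1} = \<mu>"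
    and mu_gt: "\<mu> > 1"
  shows "ubc estar {1..2*N+1} \<ge> 1 + 2 * (\<mu> - 1)"
proof -
  define L where "L = 2*N+1"
  define T where "T = {K. \<forall>a \<epsilon>. (\<forall>j\<in>{1..N+1}. \<epsilon> j = 1 \<or> \<epsilon> j = -1) \<longrightarrow>
      norm (\<Sum>j\<in>{1..N+1}. (\<epsilon> j * a j) *\<^sub>R estar (2*j-1)) \<le> K * norm (\<Sum>j\<in>{1..N+1}. a j *\<^sub>R estar (2*j-1))}"
  define S where "S = {K. \<forall>a \<epsilon>. (\<forall>j\<in>{1..L}. \<epsilon> j = 1 \<or> \<epsilon> j = -1) \<longrightarrow>
      norm (\<Sum>j\<in>{1..L}. (\<epsilon> j * a j) *\<^sub>R estar j) \<le> K * norm (\<Sum>j\<in>{1..L}. a j *\<^sub>R estar j)}"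
  have muT: "\<mu> = Inf T" using mu_def unfolding ubc_def T_def by simp
  have ubcS: "ubc estar {1..2*N+1} = Inf S" unfolding ubc_def S_def L_def by simp
  have biorthL: "\<forall>k\<in>{1..L}. \<forall>i\<in>{1..L}. estar k (e i) = (if k = i then 1 else 0)"
    using biorth L_def by simp
  have spansL: "span (e ` {1..L}) = UNIV" using spans L_def by simp
  have e1: "estar 1 \<noteq> 0"
  proof
    assume "estar 1 = 0"
    moreover have "estar 1 (e 1) = 1" using biorth by auto
    ultimately show False by simp
  qed
  have n1: "norm (estar 1) > 0" using e1 by simp
  have bdT: "bdd_below T"
  proof (rule bdd_belowI)
    fix K assume "K \<in> T"
    then have H: "\<forall>a \<epsilon>. (\<forall>j\<in>{1..N+1}. \<epsilon> j = 1 \<or> \<epsilon> j = -1) \<longrightarrow>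
      norm (\<Sum>j\<in>{1..N+1}. (\<epsilon> j * a j) *\<^sub>R estar (2*j-1)) \<le> K * norm (\<Sum>j\<in>{1..N+1}. a j *\<^sub>R estar (2*j-1))"
      unfolding T_def by blast
    have "norm (\<Sum>j\<in>{1..N+1}. (1 * (if j = 1 then 1 else 0)) *\<^sub>R estar (2*j-1))
        \<le> K * norm (\<Sum>j\<in>{1..N+1}. (if j = (1::nat) then 1 else 0) *\<^sub>R estar (2*j-1))"
      using H[rule_format, of "\<lambda>_. 1" "\<lambda>j. if j = 1 then 1 else 0"] by simp
    moreover have "(\<Sum>j\<in>{1..N+1}. (if j = (1::nat) then 1 else 0) *\<^sub>R estar (2*j-1)) = estar 1"
    proof -
      have "(\<Sum>j\<in>{1..N+1}. (if j = (1::nat) then 1 else 0) *\<^sub>R estar (2*j-1))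
          = (\<Sum>j\<in>{1..N+1}. if j = (1::nat) then estar (2*j-1) else 0)"
        by (rule sum.cong) auto
      also have "\<dots> = estar 1" by (subst sum.delta) auto
      finally show ?thesis .
    qed
    ultimately have "norm (estar 1) \<le> K * norm (estar 1)" by simp
    then show "1 \<le> K" using n1 by simp
  qed
  have S1: "K \<ge> 1" if "K \<in> S" for K
  proof -
    have H: "\<forall>a \<epsilon>. (\<forall>j\<in>{1..L}. \<epsilon> j = 1 \<or> \<epsilon> j = -1) \<longrightarrow>
      norm (\<Sum>j\<in>{1..L}. (\<epsilon> j * a j) *\<^sub>R estar j) \<le> K * norm (\<Sum>j\<in>{1..L}. a j *\<^sub>R estar j)"
      using that unfolding S_def by blast
    have "norm (\<Sum>j\<in>{1..L}. (1 * (if j = 1 then 1 else 0)) *\<^sub>R estar j)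
        \<le> K * norm (\<Sum>j\<in>{1..L}. (if j = (1::nat) then 1 else 0) *\<^sub>R estar j)"
      using H[rule_format, of "\<lambda>_. 1" "\<lambda>j. if j = 1 then 1 else 0"] by simp
    moreover have "(\<Sum>j\<in>{1..L}. (if j = (1::nat) then 1 else 0) *\<^sub>R estar j) = estar 1"
    proof -
      have "(\<Sum>j\<in>{1..L}. (if j = (1::nat) then 1 else 0) *\<^sub>R estar j)
          = (\<Sum>j\<in>{1..L}. if j = (1::nat) then estar j else 0)"
        by (rule sum.cong) auto
      also have "\<dots> = estar 1" using L_def by (subst sum.delta) auto
      finally show ?thesis .
    qed
    ultimately have "norm (estar 1) \<le> K * norm (estar 1)" by simp
    then show "1 \<le> K" using n1 by simp
  qed
  have neS: "S \<noteq> {}"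
  proof -
    define K0 where "K0 = (\<Sum>k\<in>{1..L}. norm (e k) * norm (estar k))"
    have "K0 \<in> S" unfolding S_def
    proof (intro CollectI allI impI)
      fix a \<epsilon> :: "nat \<Rightarrow> real" assume sg: "\<forall>j\<in>{1..L}. \<epsilon> j = 1 \<or> \<epsilon> j = -1"
      define F where "F = (\<Sum>j\<in>{1..L}. a j *\<^sub>R estar j)"
      have ak: "\<bar>a k\<bar> \<le> norm F * norm (e k)" if "k \<in> {1..L}" for k
      proof -
        have "a k = F (e k)" unfolding F_def using eval_sum[OF biorthL that] by simp
        then show ?thesis using norm_blinfun[of F "e k"] by simp
      qed
      have "norm (\<Sum>j\<in>{1..L}. (\<epsilon> j * a j) *\<^sub>R estar j) \<le> (\<Sum>j\<in>{1..L}. norm ((\<epsilon> j * a j) *\<^sub>R estar j))"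
        by (rule norm_sum)
      also have "\<dots> \<le> (\<Sum>j\<in>{1..L}. norm F * (norm (e j) * norm (estar j)))"
      proof (rule sum_mono)
        fix j assume j: "j \<in> {1..L}"
        have "\<epsilon> j = 1 \<or> \<epsilon> j = -1" using sg j by blast
        then have "\<bar>\<epsilon> j\<bar> = 1" by auto
        then have "norm ((\<epsilon> j * a j) *\<^sub>R estar j) = \<bar>a j\<bar> * norm (estar j)" by (simp add: abs_mult)
        also have "\<dots> \<le> norm F * norm (e j) * norm (estar j)" using ak[OF j] by (simp add: mult_right_mono)
        finally show "norm ((\<epsilon> j * a j) *\<^sub>R estar j) \<le> norm F * (norm (e j) * norm (estar j))" by (simp add: mult.assoc)
      qed
      also have "\<dots> = K0 * norm F" unfolding K0_def by (simp add: sum_distrib_left mult.commute)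
      finally show "norm (\<Sum>j\<in>{1..L}. (\<epsilon> j * a j) *\<^sub>R estar j) \<le> K0 * norm (\<Sum>j\<in>{1..L}. a j *\<^sub>R estar j)"
        unfolding F_def .
    qed
    then show ?thesis by blast
  qed
  have key: "(K + 1) / 2 \<in> T" if KS: "K \<in> S" for K
  proof -
    have K0: "K \<ge> 0" using S1[OF KS] by simp
    show ?thesis unfolding T_def
    proof (intro CollectI allI impI)
      fix a \<epsilon> :: "nat \<Rightarrow> real" assume sg: "\<forall>j\<in>{1..N+1}. \<epsilon> j = 1 \<or> \<epsilon> j = -1"
      define fv where "fv = (\<Sum>j\<in>{1..N+1}. a j *\<^sub>R estar (2*j-1))"
      define g where "g = (\<Sum>j\<in>{1..N+1}. (\<epsilon> j * a j) *\<^sub>R estar (2*j-1))"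
      define M where "M = norm fv"
      have M0: "M \<ge> 0" unfolding M_def by simp
      define Od where "Od = (\<lambda>j. 2*j-1) ` {1..N+1::nat}"
      define St where "St k = Od \<union> (\<lambda>l. 2*l) ` {1..k::nat}" for k
      have injO: "inj_on (\<lambda>j. 2*j-1) {1..N+1::nat}" by (auto simp: inj_on_def)
      have OL: "Od \<subseteq> {1..L}" unfolding Od_def L_def by auto
      have StL: "St k \<subseteq> {1..L}" if "k \<le> N" for k unfolding St_def using OL that L_def by auto
      have StN: "St N = {1..L}"
      proof
        show "St N \<subseteq> {1..L}" using StL by simp
        show "{1..L} \<subseteq> St N"
        proof
          fix i assume i: "i \<in> {1..L}"
          show "i \<in> St N"
          proof (cases "odd i")
            case True
            have i12: "1 \<le> i" "i \<le> 2*N+1" using i L_def by auto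
            have "i = 2*((i+1) div 2) - 1" using True by presburger
            moreover have "(i+1) div 2 \<in> {1..N+1}" unfolding atLeastAtMost_iff using True i12 by presburger
            ultimately
            show ?thesis unfolding St_def Od_def by blast
          next
            case False
            have i12: "1 \<le> i" "i \<le> 2*N+1" using i L_def by auto
            have "i = 2*(i div 2)" using False by presburger
            moreover have "i div 2 \<in> {1..N}" unfolding atLeastAtMost_iff using False i12 by presburger
            ultimately
            show ?thesis unfolding St_def by blast
          qed
        qed
      qed
      have oo: "estar (2*j-1) (e (2*l-1)) = (if l = j then 1 else 0)" if "j \<in> {1..N+1}" "l \<in> {1..N+1}" for j l
      proof -
        have "2*j-1 \<in> {1..2*N+1}" "2*l-1 \<in> {1..2*N+1}" using that by auto
        moreover have "(2*j-1 = 2*l-1) \<longleftrightarrow> l = j" using that by auto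
        ultimately show ?thesis using biorth by auto
      qed
      have base: "\<bar>g y\<bar> \<le> M * norm y" if y: "y \<in> span (e ` Od)" for y
      proof -
        have "y = (\<Sum>i\<in>Od. estar i y *\<^sub>R e i)" using expand_span[OF biorthL OL y] .
        also have "\<dots> = (\<Sum>j\<in>{1..N+1}. estar (2*j-1) y *\<^sub>R e (2*j-1))"
          unfolding Od_def by (simp only: sum.reindex[OF injO] o_def)
        finally have yexp: "y = (\<Sum>j\<in>{1..N+1}. estar (2*j-1) y *\<^sub>R e (2*j-1))" .
        define Yv where "Yv j = estar (2*j-1) y *\<^sub>R e (2*j-1)" for j
        define y' where "y' = (\<Sum>j=1..N+1. \<epsilon> j *\<^sub>R Yv j)"
        have sk: "norm (\<Sum>j=1..N+1. \<epsilon> j *\<^sub>R Yv j) \<le> 1 * norm (\<Sum>j=1..N+1. Yv j)"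
        proof -
          note H = skipped[unfolded skipped_unconditional_def, rule_format]
          have c3: "\<forall>j\<in>{1..N+1}. Yv j \<in> span (e ` {i. 2*(j-1) < i \<and> i < 2*j \<and> 1 \<le> i \<and> i \<le> 2*N+1})"
          proof
            fix j assume j: "j \<in> {1..N+1::nat}"
            have "2*j-1 \<in> {i. 2*(j-1) < i \<and> i < 2*j \<and> 1 \<le> i \<and> i \<le> 2*N+1}" using j by auto
            then have "e (2*j-1) \<in> span (e ` {i. 2*(j-1) < i \<and> i < 2*j \<and> 1 \<le> i \<and> i \<le> 2*N+1})"
              by (intro span_base imageI)
            then show "Yv j \<in> span (e ` {i. 2*(j-1) < i \<and> i < 2*j \<and> 1 \<le> i \<and> i \<le> 2*N+1})"
              unfolding Yv_def by (rule span_mul)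
          qed
          have c2: "\<forall>j\<in>{1..N+1::nat}. 2*(j-1) + 2 \<le> 2*j" by auto
          show ?thesis
            by (rule H[where m="\<lambda>j. 2*j" and n="N+1" and y=Yv and \<epsilon>=\<epsilon>]) (use c2 c3 sg in simp_all)
        qed
        have ny: "norm y' \<le> norm y" using sk yexp unfolding y'_def Yv_def by simp
        have est: "estar (2*j-1) y' = \<epsilon> j * estar (2*j-1) y" if j: "j \<in> {1..N+1}" for j
        proof -
          have "estar (2*j-1) y' = (\<Sum>l=1..N+1. (\<epsilon> l * estar (2*l-1) y) * estar (2*j-1) (e (2*l-1)))"
            unfolding y'_def Yv_def by (simp only: blinfun.sum_right blinfun.scaleR_right real_scaleR_def mult.assoc)
          also have "\<dots> = (\<Sum>l=1..N+1. if l = j then \<epsilon> l * estar (2*l-1) y else 0)"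
            by (rule sum.cong) (use oo j in auto)
          also have "\<dots> = \<epsilon> j * estar (2*j-1) y" using j by simp
          finally show ?thesis .
        qed
        have "g y = (\<Sum>j\<in>{1..N+1}. (\<epsilon> j * a j) * estar (2*j-1) y)"
          unfolding g_def by (simp only: blinfun.sum_left blinfun.scaleR_left real_scaleR_def)
        also have "\<dots> = (\<Sum>j\<in>{1..N+1}. a j * estar (2*j-1) y')"
          by (rule sum.cong) (use est in auto)
        also have "\<dots> = fv y'"
          unfolding fv_def by (simp only: blinfun.sum_left blinfun.scaleR_left real_scaleR_def)
        finally have "\<bar>g y\<bar> = \<bar>fv y'\<bar>" by simp
        also have "\<dots> \<le> norm fv * norm y'" using norm_blinfun[of fv y'] by simp
        also have "\<dots> \<le> M * norm y" unfolding M_def using ny by (simp add: mult_left_mono)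
        finally show ?thesis .
      qed
      have ind: "\<exists>G::'a \<Rightarrow>\<^sub>L real. (\<forall>x\<in>span (e ` St k). \<bar>G x\<bar> \<le> M * norm x) \<and> (\<forall>j\<in>{1..N+1}. G (e (2*j-1)) = g (e (2*j-1)))"
        if "k \<le> N" for k
        using that
      proof (induction k)
        case 0
        have "St 0 = Od" unfolding St_def by simp
        then show ?case using base by (intro exI[of _ g]) auto
      next
        case (Suc k)
        then obtain G :: "'a \<Rightarrow>\<^sub>L real" where G1: "\<forall>x\<in>span (e ` St k). \<bar>G x\<bar> \<le> M * norm x"
          and G2: "\<forall>j\<in>{1..N+1}. G (e (2*j-1)) = g (e (2*j-1))" by auto
        define z where "z = e (2*k+2)"
        define \<psi> where "\<psi> = estar (2*k+2)"
        have zr: "2*k+2 \<in> {1..2*N+1}" using Suc.prems by auto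
        have notin: "2*k+2 \<notin> St k" unfolding St_def Od_def by (auto; (presburger)?)
        have van0: "\<forall>b\<in>e ` St k. \<psi> b = 0"
          proof
            fix b assume "b \<in> e ` St k"
            then obtain i where i: "i \<in> St k" "b = e i" by auto
            have "i \<in> {1..2*N+1}" using StL[of k] Suc.prems i L_def by auto
            moreover have "i \<noteq> 2*k+2" using notin i by auto
            ultimately show "\<psi> b = 0" using biorth zr i unfolding \<psi>_def by auto
          qed
        have van: "\<forall>w\<in>span (e ` St k). \<psi> w = 0" using vanish_span[OF van0] by blast
        have pz: "\<psi> z = 1" using biorth zr unfolding \<psi>_def z_def by auto
        obtain b where hb: "\<forall>x\<in>span (insert z (span (e ` St k))). \<bar>G x + b * \<psi> x\<bar> \<le> M * norm x"
          using hb_step[OF subspace_span G1 van pz M0] by blast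
        have StS: "St (Suc k) = insert (2*k+2) (St k)"
        proof -
          have "{1..Suc k} = insert (Suc k) {1..k}" by auto
          then show ?thesis unfolding St_def by simp
        qed
        have sub: "span (e ` St (Suc k)) \<subseteq> span (insert z (span (e ` St k)))"
          unfolding StS z_def image_insert by (intro span_mono insert_mono span_superset)
        show ?case
        proof (intro exI[of _ "G + b *\<^sub>R \<psi>"] conjI ballI)
          fix x assume "x \<in> span (e ` St (Suc k))"
          then show "\<bar>(G + b *\<^sub>R \<psi>) x\<bar> \<le> M * norm x" using hb sub
            by (auto simp: blinfun.add_left blinfun.scaleR_left)
        next
          fix j assume j: "j \<in> {1..N+1}"
          have "2*j-1 \<in> {1..2*N+1}" using j by auto
          moreover have "2*j-1 \<noteq> 2*k+2" by presburger
          ultimately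
          have "\<psi> (e (2*j-1)) = 0" using biorth zr unfolding \<psi>_def by auto
          then show "(G + b *\<^sub>R \<psi>) (e (2*j-1)) = g (e (2*j-1))" using G2 j
            by (simp add: blinfun.add_left blinfun.scaleR_left)
        qed
      qed
      obtain G :: "'a \<Rightarrow>\<^sub>L real" where G1: "\<forall>x\<in>span (e ` St N). \<bar>G x\<bar> \<le> M * norm x"
          and G2: "\<forall>j\<in>{1..N+1}. G (e (2*j-1)) = g (e (2*j-1))" using ind[of N] by auto
      have nG: "norm G \<le> M" by (rule norm_blinfun_bound[OF M0]) (use G1 StN spansL in auto)
      define c where "c k = G (e k)" for k
      define \<delta> where "\<delta> (k::nat) = (if odd k then 1 else -1 :: real)" for k
      have Hs: "\<forall>a \<epsilon>. (\<forall>j\<in>{1..L}. \<epsilon> j = 1 \<or> \<epsilon> j = -1) \<longrightarrow>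
        norm (\<Sum>j\<in>{1..L}. (\<epsilon> j * a j) *\<^sub>R estar j) \<le> K * norm (\<Sum>j\<in>{1..L}. a j *\<^sub>R estar j)"
        using KS unfolding S_def by blast
      have sgn: "\<forall>j\<in>{1..L}. \<delta> j = 1 \<or> \<delta> j = -1" unfolding \<delta>_def by auto
      have ineq: "norm (\<Sum>j\<in>{1..L}. (\<delta> j * c j) *\<^sub>R estar j) \<le> K * norm (\<Sum>j\<in>{1..L}. c j *\<^sub>R estar j)"
        using Hs sgn by blast
      have sG: "(\<Sum>j\<in>{1..L}. c j *\<^sub>R estar j) = G"
        unfolding c_def using functional_expand[OF biorthL spansL, of G] by simp
      have gev: "g (e i) = (if odd i then G (e i) else 0)" if i: "i \<in> {1..L}" for i
      proof (cases "odd i")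
        case True
        define j where "j = (i+1) div 2"
        have i12: "1 \<le> i" "i \<le> 2*N+1" using i L_def by auto
        have "j \<in> {1..N+1}" unfolding atLeastAtMost_iff j_def using True i12 by presburger
        moreover have "2*j-1 = i" unfolding j_def using True by presburger
        ultimately
        show ?thesis using G2 True by metis
      next
        case False
        have iN: "i \<in> {1..2*N+1}" using i L_def by simp
        have "g (e i) = (if odd i then (\<epsilon> ((i+1) div 2) * a ((i+1) div 2)) else 0)"
          unfolding g_def by (rule odd_eval[OF biorth iN, of "\<lambda>j. \<epsilon> j * a j"])
        then show ?thesis using False by simp
      qed
      have sD: "(\<Sum>j\<in>{1..L}. (\<delta> j * c j) *\<^sub>R estar j) = g + g - G"
      proof -
        have "g + g - G = (\<Sum>j\<in>{1..L}. (g + g - G) (e j) *\<^sub>R estar j)"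
          by (rule functional_expand[OF biorthL spansL])
        also have "\<dots> = (\<Sum>j\<in>{1..L}. (\<delta> j * c j) *\<^sub>R estar j)"
          by (rule sum.cong) (auto simp: gev \<delta>_def c_def blinfun.add_left blinfun.diff_left)
        finally show ?thesis by simp
      qed
      have "2 * norm g = norm (g + g)" by (simp add: scaleR_2[symmetric])
      also have "\<dots> \<le> norm (g + g - G) + norm G" using norm_triangle_ineq[of "g + g - G" G] by simp
      also have "\<dots> \<le> K * norm G + norm G" using ineq sD sG by simp
      also have "\<dots> \<le> K * M + M" using nG K0 by (simp add: add_mono mult_left_mono)
      finally have "norm g \<le> (K + 1) / 2 * M" by (simp add: algebra_simps)
      then show "norm (\<Sum>j\<in>{1..N+1}. (\<epsilon> j * a j) *\<^sub>R estar (2*j-1)) \<le> (K + 1) / 2 * norm (\<Sum>j\<in>{1..N+1}. a j *\<^sub>R estar (2*j-1))"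
        unfolding g_def M_def fv_def .
    qed
  qed
  have "\<mu> \<le> (K + 1) / 2" if "K \<in> S" for K
    unfolding muT by (rule cInf_lower[OF key[OF that] bdT])
  then have "\<forall>K\<in>S. 1 + 2 * (\<mu> - 1) \<le> K" by force
  then have "1 + 2 * (\<mu> - 1) \<le> Inf S" using neS by (intro cInf_greatest) auto
  then show ?thesis using ubcS by simp
qed

end
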